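(* Let $N,k\in\mathbb{N}$, let $W\in\mathbb{R}^{N\times k}$ be a random matrix with entries $W_{i,j}\sim\mathcal{N}(0,2/N)$ and $b\in\mathbb{R}^N$ a random vector with $b_i\sim\mathcal{D}_i$, where each $\mathcal{D}_i$ is a symmetric probability distribution on $\mathbb{R}$, and all entries of $W$ and $b$ are jointly independent. Fix $x\in\mathbb{R}^k\setminus\{0\}$. Then each row of $\sqrt N\,\Delta(Wx+b)\,W\in\mathbb{R}^{N\times k}$ is an isotropic random vector.
   Context: For $v\in\mathbb{R}^N$, $\Delta(v)$ is the $N\times N$ diagonal matrix with diagonal entries $\mathbb{1}_{v_i>0}$. A random vector $X\in\mathbb{R}^k$ is isotropic if $\mathbb{E}[XX^T]=I_k$. *)

theory Defs
  imports "HOL-Probability.Probability"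
begin

text \<open>Vectors in R^n are functions nat => real (entries at indices < n);
  N x k matrices are functions nat => nat => real (entries at indices i < N, j < k).\<close>

definition Delta :: "nat \<Rightarrow> (nat \<Rightarrow> real) \<Rightarrow> nat \<Rightarrow> nat \<Rightarrow> real" where
  "Delta N v i j = (if i = j \<and> i < N \<and> v i > 0 then 1 else 0)"

definition mat_vec :: "nat \<Rightarrow> (nat \<Rightarrow> nat \<Rightarrow> real) \<Rightarrow> (nat \<Rightarrow> real) \<Rightarrow> nat \<Rightarrow> real" where
  "mat_vec k A x i = (\<Sum>j<k. A i j * x j)"

definition mat_mul :: "nat \<Rightarrow> (nat \<Rightarrow> nat \<Rightarrow> real) \<Rightarrow> (nat \<Rightarrow> nat \<Rightarrow> real) \<Rightarrow> nat \<Rightarrow> nat \<Rightarrow> real" where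
  "mat_mul n A B i j = (\<Sum>m<n. A i m * B m j)"

definition isotropic :: "'a measure \<Rightarrow> nat \<Rightarrow> ('a \<Rightarrow> nat \<Rightarrow> real) \<Rightarrow> bool" where
  "isotropic M k X \<longleftrightarrow>
     (\<forall>j<k. \<forall>l<k. integrable M (\<lambda>\<omega>. X \<omega> j * X \<omega> l) \<and>
        (\<integral>\<omega>. X \<omega> j * X \<omega> l \<partial>M) = (if j = l then 1 else 0))"

end

theory Submission
  imports Defs
begin

lemma (in prob_space) sym_half:
  fixes X :: "'i \<Rightarrow> 'a \<Rightarrow> real" and J :: "'i set" and c :: "'i \<Rightarrow> real"
  assumes J: "finite J" and zz: "zz \<in> J" "c zz \<noteq> 0"
    and rv: "\<And>z. z \<in> J \<Longrightarrow> X z \<in> borel_measurable M"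
    and ind: "indep_vars (\<lambda>_. borel) X J"
    and sym: "\<And>z. z \<in> J \<Longrightarrow> distr M borel (X z) = distr M borel (\<lambda>\<omega>. - X z \<omega>)"
    and noatom: "\<And>a. emeasure (distr M borel (X zz)) {a} = 0"
    and pq: "p \<in> J" "q \<in> J"
    and int: "integrable M (\<lambda>\<omega>. X p \<omega> * X q \<omega>)"
  shows "integrable M (\<lambda>\<omega>. (if (\<Sum>z\<in>J. c z * X z \<omega>) > 0 then 1 else 0) * (X p \<omega> * X q \<omega>))"
    and "(\<integral>\<omega>. (if (\<Sum>z\<in>J. c z * X z \<omega>) > 0 then 1 else 0) * (X p \<omega> * X q \<omega>) \<partial>M)
          = (\<integral>\<omega>. X p \<omega> * X q \<omega> \<partial>M) / 2"
proof -
  define X' where "X' z = (if z \<in> J then X z else (\<lambda>_. 0))" for z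
  define \<mu> where "\<mu> z = distr M borel (X' z)" for z
  define S where "S \<omega> = (\<Sum>z\<in>J. c z * X z \<omega>)" for \<omega>
  define S' where "S' y = (\<Sum>z\<in>J. c z * y z)" for y :: "'i \<Rightarrow> real"
  have rv': "X' z \<in> borel_measurable M" for z using rv by (auto simp: X'_def)
  have Smeas[measurable]: "S \<in> borel_measurable M" unfolding S_def using rv by measurable
  have psf: "product_sigma_finite \<mu>"
    unfolding product_sigma_finite_def \<mu>_def
    using rv' prob_space_distr prob_space_imp_sigma_finite by blast
  have ind': "indep_vars (\<lambda>_. borel) X' J"
    using ind by (subst indep_vars_cong[where Y=X and N'="\<lambda>_. borel"]) (auto simp: X'_def)
  have ind'': "indep_vars (\<lambda>_. borel) (\<lambda>z \<omega>. - X' z \<omega>) J"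
    using indep_vars_compose2[OF ind', of "\<lambda>_ t. - t" "\<lambda>_. borel"] by simp
  have D1: "distr M (PiM J (\<lambda>_. borel)) (\<lambda>\<omega>. \<lambda>z\<in>J. X' z \<omega>) = PiM J \<mu>"
    using ind' zz rv' unfolding \<mu>_def by (subst (asm) indep_vars_iff_distr_eq_PiM') auto
  have D2: "distr M (PiM J (\<lambda>_. borel)) (\<lambda>\<omega>. \<lambda>z\<in>J. - X' z \<omega>) = PiM J \<mu>"
  proof -
    have "distr M (PiM J (\<lambda>_. borel)) (\<lambda>\<omega>. \<lambda>z\<in>J. - X' z \<omega>) = PiM J (\<lambda>z. distr M borel (\<lambda>\<omega>. - X' z \<omega>))"
      using ind'' zz rv' by (subst (asm) indep_vars_iff_distr_eq_PiM') auto
    also have "\<dots> = PiM J \<mu>"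
      by (rule PiM_cong) (auto simp: \<mu>_def X'_def sym)
    finally show ?thesis .
  qed
  have sp: "space (\<mu> z) = UNIV" for z by (simp add: \<mu>_def)
  have setsmu: "sets (\<mu> z) = sets borel" for z by (simp add: \<mu>_def)
  have setsP: "sets (PiM J \<mu>) = sets (PiM J (\<lambda>_. borel))"
    by (rule sets_PiM_cong) (auto simp: setsmu)
  define A where "A = {y \<in> space (PiM J (\<lambda>_. borel::real measure)). S' y = 0}"
  have Ameas: "A \<in> sets (PiM J (\<lambda>_. borel))" unfolding A_def S'_def by measurable
  have null: "emeasure M {\<omega>\<in>space M. S \<omega> = 0} = 0"
  proof -
    have Ymeas: "(\<lambda>\<omega>. \<lambda>z\<in>J. X' z \<omega>) \<in> measurable M (PiM J (\<lambda>_. borel))"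
      using rv' by measurable
    have "{\<omega>\<in>space M. S \<omega> = 0} = (\<lambda>\<omega>. \<lambda>z\<in>J. X' z \<omega>) -` A \<inter> space M"
      using measurable_space[OF Ymeas] by (auto simp: A_def S_def S'_def X'_def)
    hence "emeasure M {\<omega>\<in>space M. S \<omega> = 0} = emeasure (PiM J \<mu>) A"
      using emeasure_distr[OF Ymeas Ameas] D1 by simp
    also have "\<dots> = (\<integral>\<^sup>+ y. indicator A y \<partial>PiM J \<mu>)"
      using Ameas setsP by simp
    also have "\<dots> = 0"
    proof -
      define K where "K = J - {zz}"
      have JK: "J = insert zz K" "finite K" "zz \<notin> K" using zz J by (auto simp: K_def)
      have "(\<integral>\<^sup>+ y. indicator A y \<partial>PiM J \<mu>) =
         (\<integral>\<^sup>+ y. (\<integral>\<^sup>+ t. indicator A (y(zz := t)) \<partial>\<mu> zz) \<partial>PiM K \<mu>)"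
      proof -
        have "indicator A \<in> borel_measurable (PiM J \<mu>)"
          using Ameas setsP by (intro borel_measurable_indicator) simp
        then show ?thesis unfolding JK(1)
          by (rule product_sigma_finite.product_nn_integral_insert[OF psf JK(2,3)])
      qed
      also have "\<dots> = (\<integral>\<^sup>+ y. 0 \<partial>PiM K \<mu>)"
      proof (rule nn_integral_cong)
        fix y assume y: "y \<in> space (PiM K \<mu>)"
        define a where "a = - (\<Sum>z\<in>K. c z * y z) / c zz"
        have "(\<integral>\<^sup>+ t. indicator A (y(zz := t)) \<partial>\<mu> zz) = (\<integral>\<^sup>+ t. indicator {a} t \<partial>\<mu> zz)"
        proof (rule nn_integral_cong)
          fix t assume "t \<in> space (\<mu> zz)"
          have sp2: "y(zz := t) \<in> space (PiM J (\<lambda>_. borel::real measure))"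
            using y JK by (auto simp: space_PiM PiE_def extensional_def sp)
          have "S' (y(zz := t)) = c zz * t + (\<Sum>z\<in>K. c z * y z)"
            unfolding S'_def JK(1) using JK
            by (simp add: sum.insert) (intro sum.cong, auto)
          hence "(S' (y(zz := t)) = 0) = (t = a)"
            using zz by (auto simp: a_def field_simps)
          then show "indicator A (y(zz := t)) = (indicator {a} t :: ennreal)"
            using sp2 by (auto simp: A_def indicator_def)
        qed
        also have "\<dots> = emeasure (\<mu> zz) {a}" by (simp add: setsmu)
        also have "\<dots> = 0" using noatom zz by (simp add: \<mu>_def X'_def)
        finally show "(\<integral>\<^sup>+ t. indicator A (y(zz := t)) \<partial>\<mu> zz) = 0" .
      qed
      finally show ?thesis by (cases "j = l") auto
    qed
    finally show ?thesis .
  qed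
  have AE: "AE \<omega> in M. S \<omega> \<noteq> 0"
    by (rule AE_I'[of "{\<omega>\<in>space M. S \<omega> = 0}"]) (use null in \<open>auto simp: null_sets_def\<close>)
  have [measurable]: "X p \<in> borel_measurable M" "X q \<in> borel_measurable M" using rv pq by auto
  have intP: "integrable M (\<lambda>\<omega>. (if S \<omega> > 0 then 1 else 0) * (X p \<omega> * X q \<omega>))"
    by (rule Bochner_Integration.integrable_bound[OF int]) (auto simp: abs_mult)
  have intN: "integrable M (\<lambda>\<omega>. (if S \<omega> < 0 then 1 else 0) * (X p \<omega> * X q \<omega>))"
    by (rule Bochner_Integration.integrable_bound[OF int]) (auto simp: abs_mult)
  define G where "G y = (if S' y > 0 then 1 else 0) * (y p * y q)" for y :: "'i \<Rightarrow> real"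
  have Gmeas: "G \<in> borel_measurable (PiM J (\<lambda>_. borel))"
    unfolding G_def S'_def using pq by measurable
  have Ymeas: "(\<lambda>\<omega>. \<lambda>z\<in>J. X' z \<omega>) \<in> measurable M (PiM J (\<lambda>_. borel))"
    using rv' by measurable
  have Ymeas2: "(\<lambda>\<omega>. \<lambda>z\<in>J. - X' z \<omega>) \<in> measurable M (PiM J (\<lambda>_. borel))"
    using rv' by measurable
  have "(\<integral>\<omega>. (if S \<omega> > 0 then 1 else 0) * (X p \<omega> * X q \<omega>) \<partial>M) = (\<integral>\<omega>. G (\<lambda>z\<in>J. X' z \<omega>) \<partial>M)"
    using pq by (intro Bochner_Integration.integral_cong) (auto simp: G_def S'_def S_def X'_def)
  also have "\<dots> = (\<integral>y. G y \<partial>PiM J \<mu>)"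
    using integral_distr[OF Ymeas Gmeas] D1 by simp
  also have "\<dots> = (\<integral>\<omega>. G (\<lambda>z\<in>J. - X' z \<omega>) \<partial>M)"
    using integral_distr[OF Ymeas2 Gmeas] D2 by simp
  also have "\<dots> = (\<integral>\<omega>. (if S \<omega> < 0 then 1 else 0) * (X p \<omega> * X q \<omega>) \<partial>M)"
    using pq by (intro Bochner_Integration.integral_cong)
      (auto simp: G_def S'_def S_def X'_def sum_negf)
  finally have eq: "(\<integral>\<omega>. (if S \<omega> > 0 then 1 else 0) * (X p \<omega> * X q \<omega>) \<partial>M) =
     (\<integral>\<omega>. (if S \<omega> < 0 then 1 else 0) * (X p \<omega> * X q \<omega>) \<partial>M)" .
  have "(\<integral>\<omega>. (if S \<omega> > 0 then 1 else 0) * (X p \<omega> * X q \<omega>) \<partial>M) +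
     (\<integral>\<omega>. (if S \<omega> < 0 then 1 else 0) * (X p \<omega> * X q \<omega>) \<partial>M) =
     (\<integral>\<omega>. (if S \<omega> > 0 then 1 else 0) * (X p \<omega> * X q \<omega>) + (if S \<omega> < 0 then 1 else 0) * (X p \<omega> * X q \<omega>) \<partial>M)"
    using intP intN by (rule Bochner_Integration.integral_add[symmetric])
  also have "\<dots> = (\<integral>\<omega>. X p \<omega> * X q \<omega> \<partial>M)"
    by (rule integral_cong_AE) (use AE in \<open>auto\<close>)
  finally show "(\<integral>\<omega>. (if (\<Sum>z\<in>J. c z * X z \<omega>) > 0 then 1 else 0) * (X p \<omega> * X q \<omega>) \<partial>M)
          = (\<integral>\<omega>. X p \<omega> * X q \<omega> \<partial>M) / 2"
    using eq unfolding S_def by simp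
  show "integrable M (\<lambda>\<omega>. (if (\<Sum>z\<in>J. c z * X z \<omega>) > 0 then 1 else 0) * (X p \<omega> * X q \<omega>))"
    using intP unfolding S_def .
qed

lemma mat_mul_Delta:
  assumes "i < N"
  shows "mat_mul N (Delta N v) A i j = (if v i > 0 then A i j else 0)"
proof -
  have "mat_mul N (Delta N v) A i j = (\<Sum>m<N. (if m = i then (if v i > 0 then A i j else 0) else 0))"
    unfolding mat_mul_def Delta_def by (intro sum.cong) (auto simp: assms)
  also have "\<dots> = (if v i > 0 then A i j else 0)" using assms by simp
  finally show ?thesis .
qed

theorem lemma6p3:
  fixes M :: "'a measure" and N k :: nat
    and W :: "nat \<Rightarrow> nat \<Rightarrow> 'a \<Rightarrow> real"
    and b :: "nat \<Rightarrow> 'a \<Rightarrow> real"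
    and x :: "nat \<Rightarrow> real"
  assumes "prob_space M"
    and W_normal: "\<And>i j. i < N \<Longrightarrow> j < k \<Longrightarrow>
           distributed M lborel (W i j) (normal_density 0 (sqrt (2 / real N)))"
    and b_rv: "\<And>i. i < N \<Longrightarrow> b i \<in> borel_measurable M"
    and b_symm: "\<And>i. i < N \<Longrightarrow> distr M borel (b i) = distr M borel (\<lambda>\<omega>. - b i \<omega>)"
    and indep: "prob_space.indep_vars M (\<lambda>_. borel)
           (\<lambda>z. case z of Inl (i, j) \<Rightarrow> W i j | Inr i \<Rightarrow> b i)
           ({(i, j). i < N \<and> j < k} <+> {..<N})"
    and x_nonzero: "\<exists>j<k. x j \<noteq> 0"
  shows "\<forall>i<N. isotropic M k (\<lambda>\<omega> j.
           sqrt (real N) * mat_mul N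
              (Delta N (\<lambda>m. mat_vec k (\<lambda>r c. W r c \<omega>) x m + b m \<omega>))
              (\<lambda>r c. W r c \<omega>) i j)"
proof (intro allI impI)
  interpret prob_space M by fact
  fix i assume i: "i < N"
  define \<sigma> where "\<sigma> = sqrt (2 / real N)"
  have Npos: "real N > 0" using i by simp
  have \<sigma>pos: "\<sigma> > 0" using Npos by (simp add: \<sigma>_def)
  have \<sigma>sq: "\<sigma>\<^sup>2 = 2 / real N" using Npos by (simp add: \<sigma>_def)
  have Wd: "distributed M lborel (W i j) (normal_density 0 \<sigma>)" if "j < k" for j
    using W_normal[OF i that] by (simp add: \<sigma>_def)
  have Wmeas: "W i j \<in> borel_measurable M" if "j < k" for j
    using distributed_measurable[OF Wd[OF that]] by simp
  have Wdistr: "distr M borel (W i j) = density lborel (normal_density 0 \<sigma>)" if "j < k" for j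
  proof -
    have "distr M borel (W i j) = distr M lborel (W i j)" by (rule distr_cong) auto
    also have "\<dots> = density lborel (normal_density 0 \<sigma>)"
      using distributed_distr_eq_density[OF Wd[OF that]] by simp
    finally show ?thesis .
  qed
  have Wsym: "distr M borel (W i j) = distr M borel (\<lambda>\<omega>. - W i j \<omega>)" if "j < k" for j
  proof -
    have d2: "distributed M lborel (\<lambda>\<omega>. 0 + (-1) * W i j \<omega>) (normal_density (0 + (-1) * 0) (\<bar>-1\<bar> * \<sigma>))"
      by (rule normal_density_affine[OF Wd[OF that] \<sigma>pos]) simp
    have "distr M borel (\<lambda>\<omega>. - W i j \<omega>) = distr M lborel (\<lambda>\<omega>. 0 + (-1) * W i j \<omega>)"
      by (rule distr_cong) auto
    also have "\<dots> = density lborel (normal_density 0 \<sigma>)"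
      using distributed_distr_eq_density[OF d2] by simp
    finally show ?thesis using Wdistr[OF that] by simp
  qed
  have Wnoatom: "emeasure (distr M borel (W i j)) {a} = 0" if "j < k" for j a
  proof -
    have "emeasure (distr M borel (W i j)) {a} = (\<integral>\<^sup>+ t. ennreal (normal_density 0 \<sigma> t) * indicator {a} t \<partial>lborel)"
      unfolding Wdistr[OF that] by (rule emeasure_density) auto
    also have "\<dots> = (\<integral>\<^sup>+ t. 0 \<partial>(lborel::real measure))"
      by (rule nn_integral_cong_AE) (use AE_lborel_singleton[of a] in \<open>auto\<close>)
    finally show ?thesis by simp
  qed
  have Wint: "integrable M (W i j)" if "j < k" for j
  proof -
    have "integrable lborel (\<lambda>t. normal_density 0 \<sigma> t * t)"
      using \<sigma>pos by (rule integrable_normal_moment_nz_1)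
    then show ?thesis using distributed_integrable[OF Wd[OF that], of "\<lambda>t. t"] by simp
  qed
  have Wexp: "(\<integral>\<omega>. W i j \<omega> \<partial>M) = 0" if "j < k" for j
    using normal_distributed_expectation[OF \<sigma>pos Wd[OF that]] by simp
  have Wsq_int: "integrable M (\<lambda>\<omega>. W i j \<omega> * W i j \<omega>)" if "j < k" for j
  proof -
    have "integrable lborel (\<lambda>t. normal_density 0 \<sigma> t * (t * t))"
      using integrable_normal_moment[OF \<sigma>pos, of 0 2] by (simp add: power2_eq_square)
    then show ?thesis using distributed_integrable[OF Wd[OF that], of "\<lambda>t. t * t"] by simp
  qed
  have Wsq: "(\<integral>\<omega>. W i j \<omega> * W i j \<omega> \<partial>M) = 2 / real N" if "j < k" for j
  proof -
    have "(\<integral>\<omega>. W i j \<omega> * W i j \<omega> \<partial>M) = (\<integral>t. normal_density 0 \<sigma> t * (t * t) \<partial>lborel)"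
      using distributed_integral[OF Wd[OF that], of "\<lambda>t. t * t"] by simp
    also have "\<dots> = \<sigma>\<^sup>2"
      using integral_normal_moment_even[OF \<sigma>pos, of 0 1] by (simp add: power2_eq_square)
    finally show ?thesis using \<sigma>sq by simp
  qed
  define X :: "(nat \<times> nat) + nat \<Rightarrow> 'a \<Rightarrow> real"
    where "X = (\<lambda>z. case z of Inl (i, j) \<Rightarrow> W i j | Inr i \<Rightarrow> b i)"
  define J where "J = insert (Inr i) ((\<lambda>r. Inl (i, r)) ` {..<k})"
  define c :: "(nat \<times> nat) + nat \<Rightarrow> real"
    where "c = (\<lambda>z. case z of Inl (_, r) \<Rightarrow> x r | Inr _ \<Rightarrow> 1)"
  obtain r0 where r0: "r0 < k" "x r0 \<noteq> 0" using x_nonzero by blast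
  have Jsub: "J \<subseteq> {(i, j). i < N \<and> j < k} <+> {..<N}" using i by (auto simp: J_def)
  have indJ: "indep_vars (\<lambda>_. borel) X J"
    using indep_vars_subset[OF indep[unfolded X_def[symmetric]] Jsub] .
  have Jfin: "finite J" by (simp add: J_def)
  have rvJ: "X z \<in> borel_measurable M" if "z \<in> J" for z
    using that Wmeas b_rv[OF i] by (auto simp: J_def X_def)
  have symJ: "distr M borel (X z) = distr M borel (\<lambda>\<omega>. - X z \<omega>)" if "z \<in> J" for z
    using that Wsym b_symm[OF i] by (auto simp: J_def X_def)
  have sumJ: "(\<Sum>z\<in>J. c z * X z \<omega>) = mat_vec k (\<lambda>r c. W r c \<omega>) x i + b i \<omega>" for \<omega>
  proof -
    have "(\<Sum>z\<in>J. c z * X z \<omega>) = b i \<omega> + (\<Sum>z\<in>(\<lambda>r. Inl (i, r)) ` {..<k}. c z * X z \<omega>)"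
      unfolding J_def by (subst sum.insert) (auto simp: c_def X_def)
    also have "(\<Sum>z\<in>(\<lambda>r. Inl (i, r)) ` {..<k}. c z * X z \<omega>) = (\<Sum>r<k. x r * W i r \<omega>)"
      by (subst sum.reindex) (auto simp: inj_on_def c_def X_def)
    finally show ?thesis by (simp add: mat_vec_def mult.commute)
  qed
  show "isotropic M k (\<lambda>\<omega> j.
           sqrt (real N) * mat_mul N
              (Delta N (\<lambda>m. mat_vec k (\<lambda>r c. W r c \<omega>) x m + b m \<omega>))
              (\<lambda>r c. W r c \<omega>) i j)"
    unfolding isotropic_def
  proof (intro allI impI)
    fix j l assume j: "j < k" and l: "l < k"
    have pJ: "Inl (i, j) \<in> J" "Inl (i, l) \<in> J" "Inl (i, r0) \<in> J" using j l r0 by (auto simp: J_def)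
    have intWW: "integrable M (\<lambda>\<omega>. W i j \<omega> * W i l \<omega>)"
      and expWW: "(\<integral>\<omega>. W i j \<omega> * W i l \<omega> \<partial>M) = (if j = l then 2 / real N else 0)"
    proof -
      have "integrable M (\<lambda>\<omega>. W i j \<omega> * W i l \<omega>) \<and>
            (\<integral>\<omega>. W i j \<omega> * W i l \<omega> \<partial>M) = (if j = l then 2 / real N else 0)"
      proof (cases "j = l")
        case True then show ?thesis using Wsq_int[OF j] Wsq[OF j] by simp
      next
        case False
        have ind2: "indep_vars (\<lambda>_. borel) X {Inl (i, j), Inl (i, l)}"
          by (rule indep_vars_subset[OF indJ]) (use pJ in auto)
        have ints: "\<And>z. z \<in> {Inl (i, j), Inl (i, l)} \<Longrightarrow> integrable M (X z)"
          using Wint j l by (auto simp: X_def)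
        have e1: "(\<integral>\<omega>. (\<Prod>z\<in>{Inl (i, j), Inl (i, l)}. X z \<omega>) \<partial>M) = (\<Prod>z\<in>{Inl (i, j), Inl (i, l)}. \<integral>\<omega>. X z \<omega> \<partial>M)"
          by (rule indep_vars_lebesgue_integral[OF _ ind2 ints]) auto
        have i1: "integrable M (\<lambda>\<omega>. (\<Prod>z\<in>{Inl (i, j), Inl (i, l)}. X z \<omega>))"
          by (rule indep_vars_integrable[OF _ ind2 ints]) auto
        show ?thesis using e1 i1 False Wexp[OF j] Wexp[OF l] by (simp add: X_def)
      qed
      then show "integrable M (\<lambda>\<omega>. W i j \<omega> * W i l \<omega>)"
        and "(\<integral>\<omega>. W i j \<omega> * W i l \<omega> \<partial>M) = (if j = l then 2 / real N else 0)" by auto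
    qed
    have intXX: "integrable M (\<lambda>\<omega>. X (Inl (i, j)) \<omega> * X (Inl (i, l)) \<omega>)"
      using intWW by (simp add: X_def)
    have Hc: "c (Inl (i, r0)) \<noteq> 0" using r0 by (simp add: c_def)
    have Hn: "emeasure (distr M borel (X (Inl (i, r0)))) {a} = 0" for a
      using Wnoatom[OF r0(1)] by (simp add: X_def)
    note H = sym_half[where J=J and c=c and zz="Inl (i, r0)" and X=X and p="Inl (i, j)" and q="Inl (i, l)",
       OF Jfin pJ(3) Hc rvJ indJ symJ Hn pJ(1,2) intXX]
    define F where "F \<omega> = (if (\<Sum>z\<in>J. c z * X z \<omega>) > 0 then 1 else 0) * (X (Inl (i, j)) \<omega> * X (Inl (i, l)) \<omega>)" for \<omega>
    have I: "(\<integral>\<omega>. F \<omega> \<partial>M) = (if j = l then 1 / real N else 0)"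
    proof -
      have "(\<integral>\<omega>. F \<omega> \<partial>M) = (\<integral>\<omega>. X (Inl (i, j)) \<omega> * X (Inl (i, l)) \<omega> \<partial>M) / 2"
        using H(2) unfolding F_def .
      also have "\<dots> = (if j = l then 2 / real N else 0) / 2" using expWW by (simp add: X_def)
      finally show ?thesis by (cases "j = l") auto
    qed
    have eqF: "sqrt (real N) * mat_mul N (Delta N (\<lambda>m. mat_vec k (\<lambda>r c. W r c \<omega>) x m + b m \<omega>)) (\<lambda>r c. W r c \<omega>) i j *
          (sqrt (real N) * mat_mul N (Delta N (\<lambda>m. mat_vec k (\<lambda>r c. W r c \<omega>) x m + b m \<omega>)) (\<lambda>r c. W r c \<omega>) i l)
        = real N * F \<omega>" for \<omega>
      unfolding F_def mat_mul_Delta[OF i] sumJ using Npos by (simp add: X_def)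
    show "integrable M (\<lambda>\<omega>. sqrt (real N) * mat_mul N (Delta N (\<lambda>m. mat_vec k (\<lambda>r c. W r c \<omega>) x m + b m \<omega>)) (\<lambda>r c. W r c \<omega>) i j *
          (sqrt (real N) * mat_mul N (Delta N (\<lambda>m. mat_vec k (\<lambda>r c. W r c \<omega>) x m + b m \<omega>)) (\<lambda>r c. W r c \<omega>) i l)) \<and>
        (\<integral>\<omega>. sqrt (real N) * mat_mul N (Delta N (\<lambda>m. mat_vec k (\<lambda>r c. W r c \<omega>) x m + b m \<omega>)) (\<lambda>r c. W r c \<omega>) i j *
          (sqrt (real N) * mat_mul N (Delta N (\<lambda>m. mat_vec k (\<lambda>r c. W r c \<omega>) x m + b m \<omega>)) (\<lambda>r c. W r c \<omega>) i l) \<partial>M) =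
        (if j = l then 1 else 0)"
      unfolding eqF F_def[symmetric] using H(1) I Npos unfolding F_def by simp
  qed
qed

end
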